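(* Let $0\le t\le r\le n/2$ be integers, and let $A_y$ be the $(r-t+1)\times(r-t+1)$ tridiagonal matrix with zero diagonal, superdiagonal entries $\beta_{t+1},\dots,\beta_r$ and subdiagonal entries $\gamma_t,\dots,\gamma_{r-1}$, where $\beta_i=n-i+1$ and $\gamma_i=\frac{(i-t+1)(n-t-i)}{n-i}$. Then $A_y$ has $r-t+1$ simple eigenvalues, and its set of eigenvalues is $\{2x-(n-2t) : x\in\mathcal{R}(n-2t,\,r-t+1)\}$.
   Context: The Krawtchouk polynomial on $\{0,1\}^m$ of degree $k$ is $K^{(m)}_k(x)=\sum_{\ell=0}^k(-1)^\ell\binom{x}{\ell}\binom{m-x}{k-\ell}$ (a polynomial in $x$); $\mathcal{R}(m,k)$ denotes its set of roots, which are real and distinct. *)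

theory Defs
  imports "Jordan_Normal_Form.Char_Poly"
begin

definition krawtchouk :: "nat \<Rightarrow> nat \<Rightarrow> real \<Rightarrow> real" where
  "krawtchouk m k x = (\<Sum>l\<le>k. (-1)^l * (x gchoose l) * ((real m - x) gchoose (k - l)))"

definition kraw_roots :: "nat \<Rightarrow> nat \<Rightarrow> real set" where
  "kraw_roots m k = {x. krawtchouk m k x = 0}"

definition beta_coef :: "nat \<Rightarrow> nat \<Rightarrow> real" where
  "beta_coef n i = real n - real i + 1"

definition gamma_coef :: "nat \<Rightarrow> nat \<Rightarrow> nat \<Rightarrow> real" where
  "gamma_coef n t i = (real i - real t + 1) * (real n - real t - real i) / (real n - real i)"

definition A_y :: "nat \<Rightarrow> nat \<Rightarrow> nat \<Rightarrow> real mat" where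
  "A_y n t r = mat (r - t + 1) (r - t + 1) (\<lambda>(i, j).
      if j = i + 1 then beta_coef n (t + 1 + i)
      else if i = j + 1 then gamma_coef n t (t + j)
      else 0)"

end

theory Submission imports Defs "HOL-Computational_Algebra.Formal_Power_Series" begin

definition KF :: "real \<Rightarrow> real \<Rightarrow> nat \<Rightarrow> real" where
  "KF a b k = (\<Sum>l\<le>k. (-1)^l * (a gchoose l) * (b gchoose (k-l)))"

definition EA :: "real \<Rightarrow> real fps" where
  "EA a = Abs_fps (\<lambda>l. (-1)^l * (a gchoose l))"

lemma EA_ode: "(1 - fps_X) * fps_deriv (EA a) = fps_const (-a) * EA a"
proof (rule fps_ext)
  fix n
  have g: "of_nat (Suc n) * (a gchoose Suc n) = (a - of_nat n) * (a gchoose n)"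
    using gbinomial_mult_1[of a n] by (simp add: algebra_simps)
  show "fps_nth ((1 - fps_X) * fps_deriv (EA a)) n = fps_nth (fps_const (-a) * EA a) n"
  proof (cases n)
    case 0
    then show ?thesis using g by (simp add: EA_def algebra_simps)
  next
    case (Suc k)
    have g2: "(-1)^k * (of_nat (Suc (Suc k)) * (a gchoose Suc (Suc k))) = (-1)^k * ((a - of_nat (Suc k)) * (a gchoose Suc k))"
      using gbinomial_mult_1[of a "Suc k"] by (simp add: algebra_simps)
    show ?thesis using g2 Suc by (simp add: EA_def algebra_simps)
  qed
qed

lemma EB_ode: "(1 + fps_X) * fps_deriv (fps_binomial b) = fps_const b * fps_binomial (b::real)"
proof (rule fps_ext)
  fix n
  have g: "of_nat (Suc n) * (b gchoose Suc n) = (b - of_nat n) * (b gchoose n)"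
    using gbinomial_mult_1[of b n] by (simp add: algebra_simps)
  show "fps_nth ((1 + fps_X) * fps_deriv (fps_binomial b)) n = fps_nth (fps_const b * fps_binomial b) n"
  proof (cases n)
    case 0
    then show ?thesis using g by (simp add: algebra_simps)
  next
    case (Suc k)
    have g2: "of_nat (Suc k) * (b gchoose Suc k) = (b - of_nat k) * (b gchoose k)"
      using gbinomial_mult_1[of b k] by (simp add: algebra_simps)
    show ?thesis using g g2 Suc by (simp add: algebra_simps)
  qed
qed

lemma KF_nth: "fps_nth (EA a * fps_binomial b) k = KF a b k"
  by (simp add: fps_mult_nth KF_def EA_def atLeast0AtMost)

lemma G_ode: "(1 - fps_X^2) * fps_deriv (EA a * fps_binomial b)
   = (fps_const (b - a) - fps_const (a + b) * fps_X) * (EA a * fps_binomial (b::real))"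
proof -
  have "(1 - fps_X^2) * fps_deriv (EA a * fps_binomial b)
     = (1 + fps_X) * ((1 - fps_X) * fps_deriv (EA a)) * fps_binomial b
       + (1 - fps_X) * EA a * ((1 + fps_X) * fps_deriv (fps_binomial b))"
    unfolding fps_deriv_mult power2_eq_square by (simp add: algebra_simps)
  also have "\<dots> = (fps_const (b - a) - fps_const (a + b) * fps_X) * (EA a * fps_binomial (b::real))"
    unfolding EA_ode EB_ode fps_const_add[symmetric] fps_const_sub[symmetric] fps_const_neg[symmetric] by (simp add: algebra_simps del: fps_const_add fps_const_sub fps_const_neg)
  finally show ?thesis .
qed

lemma aux_nth1: "fps_nth ((1 - fps_X^2) * fps_deriv (G::real fps)) (Suc j) = real (Suc (Suc j)) * fps_nth G (Suc (Suc j)) - real j * fps_nth G j"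
    unfolding power2_eq_square left_diff_distrib fps_sub_nth mult.assoc fps_X_mult_nth
    by (cases j) (simp_all add: algebra_simps)

lemma aux_nth2: "fps_nth ((fps_const c - fps_const d * fps_X) * (G::real fps)) (Suc j) = c * fps_nth G (Suc j) - d * fps_nth G j"
    unfolding left_diff_distrib fps_sub_nth mult.assoc fps_X_mult_nth fps_mult_left_const_nth
    by simp

lemma KF_rec: "real (Suc (Suc j)) * KF a b (Suc (Suc j)) =
   (b - a) * KF a b (Suc j) - (a + b - real j) * KF a b j"
proof -
  let ?G = "EA a * fps_binomial b"
  have "fps_nth ((1 - fps_X^2) * fps_deriv ?G) (Suc j) = fps_nth ((fps_const (b - a) - fps_const (a + b) * fps_X) * ?G) (Suc j)"
    by (simp only: G_ode)
  moreover have "fps_nth ((1 - fps_X^2) * fps_deriv ?G) (Suc j) = real (Suc (Suc j)) * KF a b (Suc (Suc j)) - real j * KF a b j"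
    unfolding aux_nth1 KF_nth ..
  moreover have "fps_nth ((fps_const (b - a) - fps_const (a + b) * fps_X) * ?G) (Suc j) = (b - a) * KF a b (Suc j) - (a + b) * KF a b j"
    unfolding aux_nth2 KF_nth ..
  ultimately show ?thesis by (simp add: algebra_simps)
qed


lemma krawtchouk_KF: "krawtchouk m k x = KF x (real m - x) k"
  unfolding krawtchouk_def KF_def ..

definition cc :: "nat \<Rightarrow> nat \<Rightarrow> real" where
  "cc m j = real (Suc j) * (real m - real j)"

fun pp :: "nat \<Rightarrow> nat \<Rightarrow> real poly" where
  "pp m 0 = 1"
| "pp m (Suc 0) = [:0,1:]"
| "pp m (Suc (Suc j)) = pCons 0 (pp m (Suc j)) - Polynomial.smult (cc m j) (pp m j)"

lemma pp_poly_rec: "poly (pp m (Suc (Suc j))) y = y * poly (pp m (Suc j)) y - cc m j * poly (pp m j) y"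
  by simp

lemma pp_deg: "degree (pp m j) = j \<and> coeff (pp m j) j = 1"
proof (induction m j rule: pp.induct)
  case (3 m j)
  let ?A = "pCons 0 (pp m (Suc j))" and ?B = "Polynomial.smult (cc m j) (pp m j)"
  have nz: "pp m (Suc j) \<noteq> 0" using 3(1) by auto
  have dA: "degree ?A = Suc (Suc j)" using 3(1) nz by simp
  have dB: "degree ?B < Suc (Suc j)" using 3(2) by simp
  have "degree (?A + - ?B) = Suc (Suc j)"
    by (subst degree_add_eq_left) (use dA dB in auto)
  moreover have "coeff ?B (Suc (Suc j)) = 0"
    using 3(2) by (simp add: coeff_eq_0)
  ultimately show ?case using 3(1) by simp
qed auto

lemma pp_nz: "pp m j \<noteq> 0"
  using pp_deg[of m j] by auto

lemma pp_lead: "lead_coeff (pp m j) = 1"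
  using pp_deg[of m j] by simp

lemma pp_parity: "poly (pp m j) (- y) = (-1)^j * poly (pp m j) y"
  by (induction m j rule: pp.induct) (auto simp: algebra_simps)

lemma pp_kraw: "poly (pp m j) (real m - 2 * x) = fact j * krawtchouk m j x"
proof (induction m j rule: pp.induct)
  case (1 m)
  then show ?case by (simp add: krawtchouk_KF KF_def)
next
  case (2 m)
  then show ?case by (simp add: krawtchouk_KF KF_def)
next
  case (3 m j)
  have r: "real (Suc (Suc j)) * KF x (real m - x) (Suc (Suc j)) =
   (real m - 2 * x) * KF x (real m - x) (Suc j) - (real m - real j) * KF x (real m - x) j"
    using KF_rec[of j x "real m - x"] by simp
  have "poly (pp m (Suc (Suc j))) (real m - 2 * x) = 
     (real m - 2 * x) * (fact (Suc j) * KF x (real m - x) (Suc j)) - cc m j * (fact j * KF x (real m - x) j)"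
    using 3 by (simp only: pp_poly_rec krawtchouk_KF)
  also have "\<dots> = fact (Suc j) * ((real m - 2 * x) * KF x (real m - x) (Suc j) - (real m - real j) * KF x (real m - x) j)"
    by (simp add: cc_def algebra_simps)
  also have "\<dots> = fact (Suc j) * (real (Suc (Suc j)) * KF x (real m - x) (Suc (Suc j)))"
    using r by simp
  also have "\<dots> = fact (Suc (Suc j)) * KF x (real m - x) (Suc (Suc j))"
    by (simp only: fact_Suc[of "Suc j"] of_nat_Suc) (simp add: algebra_simps)
  finally show ?case by (simp add: krawtchouk_KF)
qed


lemma prod_dvd_roots:
  fixes x :: "nat \<Rightarrow> real" and p :: "real poly"
  assumes "\<forall>a b. a < b \<longrightarrow> b < j \<longrightarrow> x a < x b" "\<forall>i<j. poly p (x i) = 0"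
  shows "(\<Prod>l<j. [:-x l, 1:]) dvd p"
  using assms
proof (induction j)
  case 0
  then show ?case by simp
next
  case (Suc j)
  then have "(\<Prod>l<j. [:-x l, 1:]) dvd p" by auto
  then obtain s where s: "p = (\<Prod>l<j. [:-x l, 1:]) * s" by (elim dvdE)
  have lt: "\<forall>l<j. x l < x j" using Suc.prems(1) by auto
  have "poly (\<Prod>l<j. [:-x l, 1:]) (x j) \<noteq> 0"
    unfolding poly_prod using lt by (auto simp: prod_zero_iff)
  moreover have "poly p (x j) = 0" using Suc.prems(2) by auto
  ultimately have "poly s (x j) = 0" using s by simp
  then have "[:-x j, 1:] dvd s" by (simp add: poly_eq_0_iff_dvd)
  then have "(\<Prod>l<j. [:-x l, 1:]) * [:-x j, 1:] dvd (\<Prod>l<j. [:-x l, 1:]) * s"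
    by (rule mult_dvd_mono[OF dvd_refl])
  then show ?case using s by (simp only: prod.lessThan_Suc)
qed

lemma monic_eq_prod:
  fixes x :: "nat \<Rightarrow> real" and p :: "real poly"
  assumes "\<forall>a b. a < b \<longrightarrow> b < j \<longrightarrow> x a < x b" "\<forall>i<j. poly p (x i) = 0"
    and "degree p = j" "lead_coeff p = 1"
  shows "p = (\<Prod>l<j. [:-x l, 1:])"
proof -
  let ?Q = "(\<Prod>l<j. [:-x l, 1:])"
  obtain s where s: "p = ?Q * s" using prod_dvd_roots[OF assms(1,2)] by (elim dvdE)
  have p0: "p \<noteq> 0" using assms(4) by auto
  have Q0: "?Q \<noteq> 0" by (simp add: prod_zero_iff)
  have s0: "s \<noteq> 0" using p0 s by auto
  have dQ: "degree ?Q = j" by (subst degree_prod_sum_eq) auto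
  have lQ: "lead_coeff ?Q = 1" by (simp add: lead_coeff_prod)
  have "degree p = degree ?Q + degree s" using s Q0 s0 by (simp add: degree_mult_eq)
  then have ds: "degree s = 0" using dQ assms(3) by simp
  have "lead_coeff p = lead_coeff ?Q * lead_coeff s" using s by (simp add: lead_coeff_mult)
  then have "lead_coeff s = 1" using lQ assms(4) by simp
  moreover obtain a where "s = [:a:]" using ds by (elim degree_eq_zeroE)
  ultimately have "s = 1" by simp
  then show ?thesis using s by simp
qed

lemma sign_prod:
  fixes x :: "nat \<Rightarrow> real"
  assumes "\<forall>a b. a < b \<longrightarrow> b < j \<longrightarrow> x a < x b" "i \<le> j"
    "0 < i \<Longrightarrow> x (i - 1) < y" "i < j \<Longrightarrow> y < x i"
  shows "(-1)^(j - i) * poly (\<Prod>l<j. [:-x l, 1:]) y > 0"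
proof -
  have split: "{..<j} = {..<i} \<union> {i..<j}" using assms(2) by auto
  have "poly (\<Prod>l<j. [:-x l, 1:]) y = (\<Prod>l<j. y - x l)" by (simp add: poly_prod)
  also have "\<dots> = (\<Prod>l<i. y - x l) * (\<Prod>l\<in>{i..<j}. y - x l)"
    unfolding split by (subst prod.union_disjoint) auto
  finally have e: "poly (\<Prod>l<j. [:-x l, 1:]) y = (\<Prod>l<i. y - x l) * (\<Prod>l\<in>{i..<j}. y - x l)" .
  have "(\<Prod>l\<in>{i..<j}. y - x l) = (\<Prod>l\<in>{i..<j}. (-1) * (x l - y))" by simp
  also have "\<dots> = (-1)^(j-i) * (\<Prod>l\<in>{i..<j}. x l - y)"
    by (simp only: prod.distrib prod_constant card_atLeastLessThan)
  finally have e2: "(\<Prod>l\<in>{i..<j}. y - x l) = (-1)^(j-i) * (\<Prod>l\<in>{i..<j}. x l - y)" .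
  have p1: "(\<Prod>l<i. y - x l) > 0"
  proof (rule prod_pos)
    fix l assume "l \<in> {..<i}"
    then have "l = i - 1 \<or> (l < i - 1 \<and> i - 1 < j)" using assms(2) by auto
    then have "x l \<le> x (i - 1)" using assms(1) by (auto intro: less_imp_le)
    then show "0 < y - x l" using assms(3) \<open>l \<in> {..<i}\<close> by auto
  qed
  have p2: "(\<Prod>l\<in>{i..<j}. x l - y) > 0"
  proof (rule prod_pos)
    fix l assume "l \<in> {i..<j}"
    then have "l = i \<or> (i < l \<and> l < j)" by auto
    then have "x i \<le> x l" using assms(1) by (auto intro: less_imp_le)
    then show "0 < x l - y" using assms(4) \<open>l \<in> {i..<j}\<close> by auto
  qed
  have "(-1)^(j - i) * poly (\<Prod>l<j. [:-x l, 1:]) y = ((-1)^(j-i) * (-1)^(j-i)) * ((\<Prod>l<i. y - x l) * (\<Prod>l\<in>{i..<j}. x l - y))"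
    unfolding e e2 by (simp add: algebra_simps)
  also have "(-1::real)^(j-i) * (-1)^(j-i) = 1" by (simp add: power_add[symmetric])
  finally show ?thesis using p1 p2 by simp
qed


lemma interlace:
  assumes "i \<le> m"
  shows "\<exists>x::nat \<Rightarrow> real. (\<forall>a b. a < b \<longrightarrow> b < Suc i \<longrightarrow> x a < x b)
     \<and> (\<forall>l<Suc i. poly (pp m (Suc i)) (x l) = 0)
     \<and> (\<forall>l<Suc i. (-1)^(i-l) * poly (pp m i) (x l) > 0)"
  using assms
proof (induction i)
  case 0
  show ?case by (rule exI[of _ "\<lambda>_. 0"]) simp
next
  case (Suc i)
  from Suc.IH Suc.prems obtain x :: "nat \<Rightarrow> real" where
    mono: "\<forall>a b. a < b \<longrightarrow> b < Suc i \<longrightarrow> x a < x b" and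
    rt: "\<forall>l<Suc i. poly (pp m (Suc i)) (x l) = 0" and
    sg: "\<forall>l<Suc i. (-1)^(i-l) * poly (pp m i) (x l) > 0" by auto
  let ?P = "pp m (Suc (Suc i))"
  have c: "cc m i > 0" using Suc.prems by (simp add: cc_def)
  have hP: "(-1)^(i-l) * poly ?P (x l) < 0" if "l < Suc i" for l
  proof -
    have "(-1)^(i-l) * poly ?P (x l) = - cc m i * ((-1)^(i-l) * poly (pp m i) (x l))"
      using rt that by (simp add: algebra_simps)
    then show ?thesis using sg that c by (simp add: mult_pos_pos)
  qed
  have fact_eq: "pp m (Suc i) = (\<Prod>l<Suc i. [:-x l, 1:])"
    using monic_eq_prod[OF mono rt] pp_deg[of m "Suc i"] pp_lead[of m "Suc i"] by simp
  obtain N where N: "\<forall>z\<ge>N. poly ?P z \<ge> 1"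
    using poly_pinfty_gt_lc[of ?P] pp_lead[of m "Suc (Suc i)"] by auto
  define M where "M = max N (\<bar>x 0\<bar> + \<bar>x i\<bar> + 1)"
  have M1: "poly ?P M \<ge> 1" using N M_def by auto
  have M2: "- M < x 0" "x i < M" unfolding M_def by auto
  have M3: "poly ?P (- M) = (-1)^i * poly ?P M" using pp_parity[of m "Suc (Suc i)" M] by (simp only: power_Suc)
  define lo where "lo l = (if l = 0 then - M else x (l - 1))" for l
  define hi where "hi l = (if l = Suc i then M else x l)" for l
  have ex: "\<exists>y. lo l < y \<and> y < hi l \<and> poly ?P y = 0" if "l \<le> Suc i" for l
  proof -
    define s :: real where "s = (-1)^(Suc i - l)"
    have s_lo: "s * poly ?P (lo l) < 0"
    proof (cases "l = 0")
      case True
      then have "s * poly ?P (lo l) = ((-1)^i * (-1)^i) * (- poly ?P M)"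
        by (simp add: s_def lo_def M3 algebra_simps del: pp.simps)
      also have "(-1::real)^i * (-1)^i = 1" by (simp add: power_add[symmetric])
      finally show ?thesis using M1 by simp
    next
      case False
      then have "Suc i - l = i - (l - 1)" "l - 1 < Suc i" using that by auto
      then show ?thesis using hP[of "l - 1"] False by (simp add: s_def lo_def)
    qed
    have s_hi: "s * poly ?P (hi l) > 0"
    proof (cases "l = Suc i")
      case True
      then show ?thesis using M1 by (simp add: s_def hi_def)
    next
      case False
      then have l: "l < Suc i" using that by auto
      then have "Suc i - l = Suc (i - l)" by auto
      then have "s * poly ?P (hi l) = - ((-1)^(i-l) * poly ?P (x l))"
        using False by (simp add: s_def hi_def)
      then show ?thesis using hP[OF l] by simp
    qed
    have lh: "lo l < hi l"
      using that M2 mono unfolding lo_def hi_def by (auto dest: le_neq_implies_less)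
    have "s \<noteq> 0" unfolding s_def by simp
    obtain y where "lo l < y" "y < hi l" "poly (Polynomial.smult s ?P) y = 0"
      using poly_IVT_pos[of "lo l" "hi l" "Polynomial.smult s ?P"] lh s_lo s_hi by (auto simp del: pp.simps)
    then show ?thesis using \<open>s \<noteq> 0\<close> by (auto simp del: pp.simps)
  qed
  then obtain y where y: "\<And>l. l \<le> Suc i \<Longrightarrow> lo l < y l \<and> y l < hi l \<and> poly ?P (y l) = 0"
    by metis
  show ?case
  proof (intro exI[of _ y] conjI allI impI)
    fix a b assume ab: "a < b" "b < Suc (Suc i)"
    have "hi a = x a" using ab by (simp add: hi_def)
    moreover have "lo b = x (b - 1)" using ab by (simp add: lo_def)
    moreover have "x a \<le> x (b - 1)"
    proof (cases "a = b - 1")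
      case False
      then show ?thesis using mono ab by (auto intro: less_imp_le)
    qed simp
    ultimately show "y a < y b" using y[of a] y[of b] ab by force
  next
    fix l assume "l < Suc (Suc i)"
    then show "poly ?P (y l) = 0" using y by auto
  next
    fix l assume l: "l < Suc (Suc i)"
    have "(-1)^(Suc i - l) * poly (\<Prod>l<Suc i. [:-x l, 1:]) (y l) > 0"
    proof (rule sign_prod[OF mono])
      show "l \<le> Suc i" using l by simp
      show "0 < l \<Longrightarrow> x (l - 1) < y l" using y[of l] l by (simp add: lo_def)
      show "l < Suc i \<Longrightarrow> y l < x l" using y[of l] l by (simp add: hi_def)
    qed
    then show "(-1)^(Suc i - l) * poly (pp m (Suc i)) (y l) > 0" using fact_eq by simp
  qed
qed


definition bb :: "nat \<Rightarrow> nat \<Rightarrow> nat \<Rightarrow> real" where "bb n t j = beta_coef n (t + 1 + j)"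
definition gg :: "nat \<Rightarrow> nat \<Rightarrow> nat \<Rightarrow> real" where "gg n t j = gamma_coef n t (t + j)"
definition BB :: "nat \<Rightarrow> nat \<Rightarrow> nat \<Rightarrow> real" where "BB n t j = (\<Prod>i<j. bb n t i)"

lemma A_y_carrier: "A_y n t r \<in> carrier_mat (r - t + 1) (r - t + 1)"
  by (simp add: A_y_def)

lemma row_eq:
  assumes "v \<in> carrier_vec (r - t + 1)" "j < r - t + 1"
  shows "(A_y n t r *\<^sub>v v) $ j = (if 0 < j then gg n t (j - 1) * v $ (j - 1) else 0)
      + (if j + 1 < r - t + 1 then bb n t j * v $ (j + 1) else 0)"
proof -
  let ?k = "r - t + 1"
  have "(A_y n t r *\<^sub>v v) $ j = (\<Sum>i\<in>{0..<?k}. (if i = j + 1 then bb n t j else if j = i + 1 then gg n t i else 0) * v $ i)"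
    unfolding bb_def gg_def using assms by (simp add: A_y_def scalar_prod_def)
  also have "\<dots> = (\<Sum>i\<in>{0..<?k}. (if i = j + 1 then bb n t j * v $ i else 0)) + (\<Sum>i\<in>{0..<?k}. (if j = i + 1 then gg n t i * v $ i else 0))"
    by (subst sum.distrib[symmetric]) (rule sum.cong, auto)
  also have "(\<Sum>i\<in>{0..<?k}. (if i = j + 1 then bb n t j * v $ i else 0)) = (if j + 1 < ?k then bb n t j * v $ (j + 1) else 0)"
    by (subst sum.delta) auto
  also have "(\<Sum>i\<in>{0..<?k}. (if j = i + 1 then gg n t i * v $ i else 0)) = (if 0 < j then gg n t (j - 1) * v $ (j - 1) else 0)"
  proof (cases j)
    case 0
    then show ?thesis by simp
  next
    case (Suc j')
    have "(\<Sum>i\<in>{0..<?k}. (if j = i + 1 then gg n t i * v $ i else 0)) = (\<Sum>i\<in>{0..<?k}. (if j' = i then gg n t i * v $ i else 0))"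
      using Suc by (intro sum.cong) auto
    also have "\<dots> = gg n t j' * v $ j'" using Suc assms(2) by simp
    finally show ?thesis using Suc by simp
  qed
  finally show ?thesis by simp
qed


lemma pp_rec': "poly (pp m (Suc j)) e = e * poly (pp m j) e - (if 0 < j then cc m (j - 1) * poly (pp m (j - 1)) e else 0)"
  by (cases j) auto

lemma bb_eq: "bb n t j = real n - real t - real j"
  by (simp add: bb_def beta_coef_def)

lemma bb_pos: assumes "t \<le> r" "2 * r \<le> n" "j < r - t" shows "bb n t j > 0"
  using assms by (simp add: bb_eq)

lemma gb: assumes "t \<le> r" "2 * r \<le> n" "j < r - t"
  shows "gg n t j * bb n t j = cc (n - 2 * t) j"
proof -
  have ne: "real n - real (t + j) \<noteq> 0" using assms by simp
  have "gg n t j * bb n t j = (real (t + j) - real t + 1) * (real n - real t - real (t + j))"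
    using ne unfolding gg_def gamma_coef_def bb_eq by (simp add: field_simps)
  then show ?thesis using assms by (simp add: cc_def of_nat_diff algebra_simps)
qed

lemma BB_nz: assumes "t \<le> r" "2 * r \<le> n" "j \<le> r - t" shows "BB n t j \<noteq> 0"
  unfolding BB_def using bb_pos[OF assms(1,2)] assms(3) by (auto simp: prod_zero_iff) (metis less_le_trans less_irrefl)

lemma BB_Suc: "BB n t (Suc j) = BB n t j * bb n t j"
  by (simp add: BB_def)

lemma row_scaled:
  assumes "t \<le> r" "2 * r \<le> n" "v \<in> carrier_vec (r - t + 1)" "j < r - t + 1"
  shows "BB n t j * (A_y n t r *\<^sub>v v) $ j =
     (if 0 < j then cc (n - 2 * t) (j - 1) * (v $ (j - 1) * BB n t (j - 1)) else 0)
      + (if j + 1 < r - t + 1 then v $ (j + 1) * BB n t (j + 1) else 0)"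
proof -
  have a: "BB n t j * (if 0 < j then gg n t (j - 1) * v $ (j - 1) else 0) =
     (if 0 < j then cc (n - 2 * t) (j - 1) * (v $ (j - 1) * BB n t (j - 1)) else 0)"
  proof (cases j)
    case (Suc j')
    then have "j' < r - t" using assms(4) by simp
    then show ?thesis using Suc gb[OF assms(1,2), of j'] by (simp add: BB_Suc algebra_simps)
  qed simp
  have b: "BB n t j * (if j + 1 < r - t + 1 then bb n t j * v $ (j + 1) else 0) =
     (if j + 1 < r - t + 1 then v $ (j + 1) * BB n t (j + 1) else 0)"
    by (simp add: BB_Suc algebra_simps)
  show ?thesis unfolding row_eq[OF assms(3,4)] distrib_left a b ..
qed


lemma eig_iff:
  assumes tr: "t \<le> r" and rn: "2 * r \<le> n"
  shows "eigenvalue (A_y n t r) e \<longleftrightarrow> poly (pp (n - 2 * t) (r - t + 1)) e = 0"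
proof
  let ?k = "r - t + 1" and ?m = "n - 2 * t"
  assume "eigenvalue (A_y n t r) e"
  moreover have "dim_row (A_y n t r) = ?k" by (simp add: A_y_def)
  ultimately obtain v where v: "v \<in> carrier_vec ?k" "v \<noteq> 0\<^sub>v ?k" "A_y n t r *\<^sub>v v = e \<cdot>\<^sub>v v"
    unfolding eigenvalue_def eigenvector_def by metis
  define w where "w j = v $ j * BB n t j" for j
  have row: "e * w j = (if 0 < j then cc ?m (j - 1) * w (j - 1) else 0) + (if j + 1 < ?k then w (j + 1) else 0)"
    if "j < ?k" for j
  proof -
    have "BB n t j * (A_y n t r *\<^sub>v v) $ j = BB n t j * (e * v $ j)"
      using v(1,3) that by simp
    then show ?thesis using row_scaled[OF tr rn v(1) that] unfolding w_def by (simp add: algebra_simps)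
  qed
  have main: "j < ?k \<longrightarrow> w j = v $ 0 * poly (pp ?m j) e \<and> (Suc j < ?k \<longrightarrow> w (Suc j) = v $ 0 * poly (pp ?m (Suc j)) e)" for j
  proof (induction j)
    case 0
    have "w 0 = v $ 0" by (simp add: w_def BB_def)
    moreover have "Suc 0 < ?k \<Longrightarrow> w (Suc 0) = v $ 0 * e"
      using row[of 0] \<open>w 0 = v $ 0\<close> by (simp add: mult.commute)
    ultimately show ?case by simp
  next
    case (Suc j)
    show ?case
    proof (intro impI conjI)
      assume "Suc j < ?k"
      then show "w (Suc j) = v $ 0 * poly (pp ?m (Suc j)) e" using Suc by simp
    next
      assume a: "Suc (Suc j) < ?k"
      have "e * w (Suc j) = cc ?m j * w j + w (Suc (Suc j))" using row[of "Suc j"] a by simp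
      then have "w (Suc (Suc j)) = e * w (Suc j) - cc ?m j * w j" by simp
      then show "w (Suc (Suc j)) = v $ 0 * poly (pp ?m (Suc (Suc j))) e"
        using Suc a by (simp add: algebra_simps)
    qed
  qed
  have v0: "v $ 0 \<noteq> 0"
  proof
    assume "v $ 0 = 0"
    then have "w j = 0" if "j < ?k" for j using main[of j] that by simp
    then have "v $ j = 0" if "j < ?k" for j using that BB_nz[OF tr rn, of j] unfolding w_def by auto
    then have "v = 0\<^sub>v ?k" using v(1) by (intro eq_vecI) auto
    with v(2) show False by simp
  qed
  have "v $ 0 * poly (pp ?m ?k) e = 0"
  proof (cases "r - t")
    case 0
    then have "e * w 0 = 0" using row[of 0] by simp
    then show ?thesis using main[of 0] 0 by auto
  next
    case (Suc i)
    then have "e * w (Suc i) = cc ?m i * w i" using row[of "Suc i"] by simp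
    then show ?thesis using main[of i] Suc by (simp add: algebra_simps)
  qed
  then show "poly (pp ?m ?k) e = 0" using v0 by simp
next
  let ?k = "r - t + 1" and ?m = "n - 2 * t"
  assume root: "poly (pp ?m ?k) e = 0"
  define v where "v = vec ?k (\<lambda>j. poly (pp ?m j) e / BB n t j)"
  have vc: "v \<in> carrier_vec ?k" by (simp add: v_def)
  have vw: "v $ j * BB n t j = poly (pp ?m j) e" if "j < ?k" for j
    using that BB_nz[OF tr rn, of j] by (simp add: v_def)
  have "v $ 0 = 1" by (simp add: v_def BB_def)
  then have vnz: "v \<noteq> 0\<^sub>v ?k" by auto
  have "A_y n t r *\<^sub>v v = e \<cdot>\<^sub>v v"
  proof (rule eq_vecI)
    show "dim_vec (A_y n t r *\<^sub>v v) = dim_vec (e \<cdot>\<^sub>v v)" by (simp add: v_def A_y_def)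
  next
    fix j assume "j < dim_vec (e \<cdot>\<^sub>v v)"
    then have j: "j < ?k" by (simp add: v_def)
    have rec: "e * poly (pp ?m j) e = (if 0 < j then cc ?m (j - 1) * poly (pp ?m (j - 1)) e else 0) + poly (pp ?m (Suc j)) e"
      using pp_rec'[of ?m j e] by linarith
    have "poly (pp ?m (Suc j)) e = (if j + 1 < ?k then poly (pp ?m (j + 1)) e else 0)"
    proof (cases "j + 1 < ?k")
      case False
      then have "Suc j = ?k" using j by simp
      then show ?thesis using root False by (simp only: if_False)
    qed simp
    then have rec2: "e * poly (pp ?m j) e = (if 0 < j then cc ?m (j - 1) * poly (pp ?m (j - 1)) e else 0) + (if j + 1 < ?k then poly (pp ?m (j + 1)) e else 0)"
      using rec by linarith
    have j1: "j - 1 < ?k" using j by simp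
    have "BB n t j * (A_y n t r *\<^sub>v v) $ j = (if 0 < j then cc ?m (j - 1) * poly (pp ?m (j - 1)) e else 0) + (if j + 1 < ?k then poly (pp ?m (j + 1)) e else 0)"
      unfolding row_scaled[OF tr rn vc j] vw[OF j1] using vw[of "j + 1"] by simp
    also have "\<dots> = e * (v $ j * BB n t j)" unfolding vw[OF j] rec2 ..
    finally have "BB n t j * (A_y n t r *\<^sub>v v) $ j = BB n t j * (e * v $ j)" by simp
    then show "(A_y n t r *\<^sub>v v) $ j = (e \<cdot>\<^sub>v v) $ j"
      using BB_nz[OF tr rn, of j] j vc by simp
  qed
  moreover have "dim_row (A_y n t r) = ?k" by (simp add: A_y_def)
  ultimately show "eigenvalue (A_y n t r) e"
    unfolding eigenvalue_def eigenvector_def using vc vnz by metis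
qed


lemma card_roots_pp:
  assumes "i \<le> m"
  shows "card {y. poly (pp m (Suc i)) y = 0} = Suc i"
proof -
  obtain x :: "nat \<Rightarrow> real" where mono: "\<forall>a b. a < b \<longrightarrow> b < Suc i \<longrightarrow> x a < x b"
    and rt: "\<forall>l<Suc i. poly (pp m (Suc i)) (x l) = 0"
    using interlace[OF assms] by blast
  have inj: "inj_on x {..<Suc i}"
  proof (rule inj_onI)
    fix a b assume "a \<in> {..<Suc i}" "b \<in> {..<Suc i}" "x a = x b"
    then show "a = b" using mono by (metis lessThan_iff linorder_neqE_nat less_irrefl)
  qed
  have fin: "finite {y. poly (pp m (Suc i)) y = 0}" using pp_nz by (rule poly_roots_finite)
  have "x ` {..<Suc i} \<subseteq> {y. poly (pp m (Suc i)) y = 0}" using rt by auto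
  then have "card (x ` {..<Suc i}) \<le> card {y. poly (pp m (Suc i)) y = 0}"
    using fin by (rule card_mono[rotated])
  then have "Suc i \<le> card {y. poly (pp m (Suc i)) y = 0}" using card_image[OF inj] by simp
  moreover have "card {y. poly (pp m (Suc i)) y = 0} \<le> Suc i"
    using card_poly_roots_bound[OF pp_nz, of m "Suc i"] pp_deg[of m "Suc i"] by simp
  ultimately show ?thesis by simp
qed

theorem lemma2p5:
  fixes n t r :: nat
  assumes "t \<le> r" and "2 * r \<le> n"
  shows "card {e. eigenvalue (A_y n t r) e} = r - t + 1
    \<and> (\<forall>e. eigenvalue (A_y n t r) e \<longrightarrow> order e (char_poly (A_y n t r)) = 1)
    \<and> {e. eigenvalue (A_y n t r) e} =
        {2 * x - (real n - 2 * real t) | x. x \<in> kraw_roots (n - 2 * t) (r - t + 1)}"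
proof -
  let ?k = "r - t + 1" and ?m = "n - 2 * t" and ?A = "A_y n t r"
  have E: "{e. eigenvalue ?A e} = {y. poly (pp ?m ?k) y = 0}"
    using eig_iff[OF assms] by auto
  have card: "card {e. eigenvalue ?A e} = ?k"
    unfolding E using card_roots_pp[of "r - t" ?m] assms by simp
  have Acar: "?A \<in> carrier_mat ?k ?k" by (rule A_y_carrier)
  have dCP: "degree (char_poly ?A) = ?k" and cCP: "coeff (char_poly ?A) ?k = 1"
    using degree_monic_char_poly[OF Acar] by auto
  have CP0: "char_poly ?A \<noteq> 0" using cCP by auto
  have CProots: "{y. poly (char_poly ?A) y = 0} = {e. eigenvalue ?A e}"
    using eigenvalue_root_char_poly[OF Acar] by auto
  have ord: "order e (char_poly ?A) = 1" if ev: "eigenvalue ?A e" for e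
  proof (rule ccontr)
    assume ne: "order e (char_poly ?A) \<noteq> 1"
    have "poly (char_poly ?A) e = 0" using ev eigenvalue_root_char_poly[OF Acar] by auto
    then have "order e (char_poly ?A) \<noteq> 0" using CP0 order_root by auto
    then have "2 \<le> order e (char_poly ?A)" using ne by auto
    then have "[:-e, 1:]^2 dvd char_poly ?A" using order_divides by auto
    then obtain q where q: "char_poly ?A = [:-e, 1:]^2 * q" by (elim dvdE)
    have q0: "q \<noteq> 0" using q CP0 by auto
    have dq: "degree (char_poly ?A) = 2 + degree q"
      unfolding q using q0 by (simp add: degree_mult_eq degree_power_eq)
    have sub: "{e. eigenvalue ?A e} - {e} \<subseteq> {y. poly q y = 0}"
      using q CProots[symmetric] by auto
    have "card ({e. eigenvalue ?A e} - {e}) = ?k - 1"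
      using card ev card_Diff_singleton[of e "{e. eigenvalue ?A e}"] by (simp add: card_ge_0_finite)
    moreover have "card ({e. eigenvalue ?A e} - {e}) \<le> card {y. poly q y = 0}"
      by (rule card_mono[OF poly_roots_finite[OF q0] sub])
    moreover have "card {y. poly q y = 0} \<le> degree q" by (rule card_poly_roots_bound[OF q0])
    ultimately show False using dq dCP by simp
  qed
  have rm: "real n - 2 * real t = real ?m" using assms by (simp add: of_nat_diff)
  have set: "{e. eigenvalue ?A e} = {2 * x - (real n - 2 * real t) | x. x \<in> kraw_roots ?m ?k}"
  proof (intro equalityI subsetI)
    fix e assume "e \<in> {e. eigenvalue ?A e}"
    then have pe: "poly (pp ?m ?k) e = 0" using E by auto
    define x where "x = (real ?m + e) / 2"
    have "poly (pp ?m ?k) (real ?m - 2 * x) = 0"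
    proof -
      have "real ?m - 2 * x = - e" unfolding x_def by (simp add: field_simps)
      then show ?thesis using pe pp_parity[of ?m ?k e] by simp
    qed
    then have "krawtchouk ?m ?k x = 0" using pp_kraw[of ?m ?k x] by simp
    moreover have "e = 2 * x - (real n - 2 * real t)" unfolding rm x_def by (simp add: field_simps)
    ultimately show "e \<in> {2 * x - (real n - 2 * real t) | x. x \<in> kraw_roots ?m ?k}"
      unfolding kraw_roots_def by blast
  next
    fix e assume "e \<in> {2 * x - (real n - 2 * real t) | x. x \<in> kraw_roots ?m ?k}"
    then obtain x where x: "krawtchouk ?m ?k x = 0" and e: "e = 2 * x - real ?m"
      unfolding kraw_roots_def rm by auto
    have "poly (pp ?m ?k) (real ?m - 2 * x) = 0" using pp_kraw[of ?m ?k x] x by simp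
    then have "poly (pp ?m ?k) e = 0" using pp_parity[of ?m ?k "real ?m - 2 * x"] e by simp
    then show "e \<in> {e. eigenvalue ?A e}" using E by auto
  qed
  show ?thesis using card ord set by blast
qed

end
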